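(* Let $(E,\mathcal{E},\mu)$, the exchangeable pair $(X,X')$, $L$ and $\Gamma$ be as in the context, and let $F\in L^4(\mu)$. Then \[\mathbb{E}\bigl[(F(X')-F(X))^4\bigr]=4\Bigl(E_\mu[F^3\,LF]+3E_\mu[F^2\Gamma(F,F)]\Bigr)=4\Bigl(3E_\mu[F^2\Gamma(F,F)]-E_\mu[\Gamma(F^3,F)]\Bigr).\] If moreover $F$ is an eigenfunction of $-L$ with eigenvalue $\lambda>0$ (i.e. $LF=-\lambda F$), then \[\mathbb{E}\bigl[(F(X')-F(X))^4\bigr]=4\lambda\Bigl(3E_\mu\bigl[F^2\lambda^{-1}\Gamma(F,F)\bigr]-E_\mu[F^4]\Bigr).\]
   Context: $(E,\mathcal{E},\mu)$ is a probability space; $(X,X')$ is an exchangeable pair (i.e. $(X,X')\overset{d}{=}(X',X)$) of $E$-valued random variables on $(\Omega,\mathcal{F},\mathbb{P})$ with $\mathbb{P}\circ X^{-1}=\mu$, admitting a regular conditional distribution of $X'$ given $X$. $LF(x):=\mathbb{E}[F(X')-F(X)\mid X=x]$ (defined on $L^1(\mu)$ and $L^2(\mu)$), $\Gamma(F,G):=\frac12(L(FG)-F\,LG-G\,LF)$; $E_\mu$ is expectation under $\mu$. *)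

theory Defs
  imports "HOL-Probability.Probability"
begin

text \<open>The Markov kernel K is a regular conditional distribution of X' given X = x.
  The generator: L F x = E[F(X') - F(X) | X = x] = integral of (F y - F x) over K x.\<close>
definition Lgen :: "('a \<Rightarrow> 'a measure) \<Rightarrow> ('a \<Rightarrow> real) \<Rightarrow> 'a \<Rightarrow> real" where
  "Lgen K F x = (\<integral>y. (F y - F x) \<partial>(K x))"

definition Gam :: "('a \<Rightarrow> 'a measure) \<Rightarrow> ('a \<Rightarrow> real) \<Rightarrow> ('a \<Rightarrow> real) \<Rightarrow> 'a \<Rightarrow> real" where
  "Gam K F G x = (Lgen K (\<lambda>y. F y * G y) x - F x * Lgen K G x - G x * Lgen K F x) / 2"

end

theory Submission
  imports Defs
begin

lemma kernel_D:
  assumes K: "K \<in> M \<rightarrow>\<^sub>M prob_algebra M"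
  shows "(\<lambda>x. distr (K x) (M \<Otimes>\<^sub>M M) (Pair x)) \<in> M \<rightarrow>\<^sub>M subprob_algebra (M \<Otimes>\<^sub>M M)"
  by (rule measurable_distr2[where M=M]) (auto intro: measurable_prob_algebraD[OF K])

lemma kernel_sets:
  assumes K: "K \<in> M \<rightarrow>\<^sub>M prob_algebra M" and x: "x \<in> space M"
  shows "sets (K x) = sets M" "prob_space (K x)"
  using measurable_space[OF K x] by (auto simp: space_prob_algebra)

lemma bind_eq_D:
  assumes K: "K \<in> M \<rightarrow>\<^sub>M prob_algebra M"
  shows "M \<bind> (\<lambda>x. K x \<bind> (\<lambda>y. return (M \<Otimes>\<^sub>M M) (x, y))) = M \<bind> (\<lambda>x. distr (K x) (M \<Otimes>\<^sub>M M) (Pair x))"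
proof (rule bind_cong_All, intro ballI)
  fix x assume x: "x \<in> space M"
  interpret prob_space "K x" using kernel_sets[OF K x] by simp
  have "Pair x \<in> K x \<rightarrow>\<^sub>M M \<Otimes>\<^sub>M M"
    using kernel_sets[OF K x] x by (simp cong: measurable_cong_sets)
  then show "K x \<bind> (\<lambda>y. return (M \<Otimes>\<^sub>M M) (x, y)) = distr (K x) (M \<Otimes>\<^sub>M M) (Pair x)"
    by (intro bind_return_distr') (auto simp: not_empty)
qed

lemma inner_meas:
  fixes g :: "'a \<times> 'a \<Rightarrow> real"
  assumes K: "K \<in> M \<rightarrow>\<^sub>M prob_algebra M" and g: "g \<in> borel_measurable (M \<Otimes>\<^sub>M M)"
  shows "(\<lambda>x. \<integral>y. g (x, y) \<partial>K x) \<in> borel_measurable M"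
proof -
  have "(\<lambda>x. \<integral>z. g z \<partial>distr (K x) (M \<Otimes>\<^sub>M M) (Pair x)) \<in> borel_measurable M"
    by (rule measurable_compose[OF kernel_D[OF K] integral_measurable_subprob_algebra[OF g]])
  moreover have "\<And>x. x \<in> space M \<Longrightarrow> (\<integral>z. g z \<partial>distr (K x) (M \<Otimes>\<^sub>M M) (Pair x)) = (\<integral>y. g (x, y) \<partial>K x)"
  proof -
    fix x assume x: "x \<in> space M"
    have "Pair x \<in> K x \<rightarrow>\<^sub>M M \<Otimes>\<^sub>M M"
      using kernel_sets[OF K x] x by (simp cong: measurable_cong_sets)
    then show "?thesis x" by (simp add: integral_distr g)
  qed
  ultimately show ?thesis by (simp cong: measurable_cong)
qed


lemma fub_nonneg:
  fixes g :: "'a \<times> 'a \<Rightarrow> real"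
  assumes K: "K \<in> M \<rightarrow>\<^sub>M prob_algebra M" and g[measurable]: "g \<in> borel_measurable (M \<Otimes>\<^sub>M M)"
    and nn: "\<And>z. 0 \<le> g z"
    and int: "integrable (M \<bind> (\<lambda>x. distr (K x) (M \<Otimes>\<^sub>M M) (Pair x))) g"
    and Mne: "space M \<noteq> {}"
  shows "AE x in M. integrable (distr (K x) (M \<Otimes>\<^sub>M M) (Pair x)) g"
    "integrable M (\<lambda>x. \<integral>z. g z \<partial>distr (K x) (M \<Otimes>\<^sub>M M) (Pair x))"
    "(\<integral>z. g z \<partial>(M \<bind> (\<lambda>x. distr (K x) (M \<Otimes>\<^sub>M M) (Pair x))))
      = (\<integral>x. \<integral>z. g z \<partial>distr (K x) (M \<Otimes>\<^sub>M M) (Pair x) \<partial>M)"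
proof -
  define D where "D = (\<lambda>x. distr (K x) (M \<Otimes>\<^sub>M M) (Pair x))"
  have D[measurable]: "D \<in> M \<rightarrow>\<^sub>M subprob_algebra (M \<Otimes>\<^sub>M M)"
    unfolding D_def by (rule kernel_D[OF K])
  have sD: "\<And>x. sets (D x) = sets (M \<Otimes>\<^sub>M M)" unfolding D_def by simp
  have gD: "\<And>x. g \<in> borel_measurable (D x)"
    using sD g by (simp cong: measurable_cong_sets)
  have sJ: "sets (M \<bind> D) = sets (M \<Otimes>\<^sub>M M)"
    by (rule sets_bind[OF sD Mne])
  have gJ: "g \<in> borel_measurable (M \<bind> D)"
    using sJ g by (simp cong: measurable_cong_sets)
  have int': "integrable (M \<bind> D) g" using int D_def by simp
  have e1: "(\<integral>\<^sup>+z. ennreal (g z) \<partial>(M \<bind> D)) = (\<integral>\<^sup>+x. \<integral>\<^sup>+z. ennreal (g z) \<partial>D x \<partial>M)"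
    by (rule nn_integral_bind[OF _ D]) simp
  have e2: "(\<integral>\<^sup>+z. ennreal (g z) \<partial>(M \<bind> D)) = ennreal (\<integral>z. g z \<partial>(M \<bind> D))"
    by (rule nn_integral_eq_integral[OF int']) (simp add: nn)
  have mI: "(\<lambda>x. \<integral>\<^sup>+z. ennreal (g z) \<partial>D x) \<in> borel_measurable M"
    by (rule measurable_compose[OF D nn_integral_measurable_subprob_algebra]) simp
  have fin: "(\<integral>\<^sup>+x. \<integral>\<^sup>+z. ennreal (g z) \<partial>D x \<partial>M) \<noteq> \<infinity>"
  proof -
    have "(\<integral>\<^sup>+x. \<integral>\<^sup>+z. ennreal (g z) \<partial>D x \<partial>M) = ennreal (\<integral>z. g z \<partial>(M \<bind> D))"
      using e1 e2 by simp
    then show ?thesis by simp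
  qed
  have ae: "AE x in M. (\<integral>\<^sup>+z. ennreal (g z) \<partial>D x) \<noteq> \<infinity>"
    by (rule nn_integral_PInf_AE[OF mI fin])
  have aeI: "AE x in M. integrable (D x) g"
  proof (rule AE_mp[OF ae], intro AE_I2 impI)
    fix x assume "(\<integral>\<^sup>+z. ennreal (g z) \<partial>D x) \<noteq> \<infinity>"
    then show "integrable (D x) g"
      by (intro integrableI_nonneg[OF gD]) (simp_all add: nn less_top)
  qed
  then show "AE x in M. integrable (distr (K x) (M \<Otimes>\<^sub>M M) (Pair x)) g" by (simp add: D_def)
  have aeE: "AE x in M. (\<integral>\<^sup>+z. ennreal (g z) \<partial>D x) = ennreal (\<integral>z. g z \<partial>D x)"
  proof (rule AE_mp[OF aeI], intro AE_I2 impI)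
    fix x assume "integrable (D x) g"
    then show "(\<integral>\<^sup>+z. ennreal (g z) \<partial>D x) = ennreal (\<integral>z. g z \<partial>D x)"
      by (intro nn_integral_eq_integral) (simp_all add: nn)
  qed
  have mi: "(\<lambda>x. \<integral>z. g z \<partial>D x) \<in> borel_measurable M"
    by (rule measurable_compose[OF D integral_measurable_subprob_algebra]) simp
  have e3: "(\<integral>\<^sup>+x. ennreal (\<integral>z. g z \<partial>D x) \<partial>M) = ennreal (\<integral>z. g z \<partial>(M \<bind> D))"
    using e1 e2 nn_integral_cong_AE[OF aeE] by simp
  have intM: "integrable M (\<lambda>x. \<integral>z. g z \<partial>D x)"
    by (rule integrableI_nonneg[OF mi]) (simp_all add: nn e3)
  then show "integrable M (\<lambda>x. \<integral>z. g z \<partial>distr (K x) (M \<Otimes>\<^sub>M M) (Pair x))" by (simp add: D_def)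
  have "ennreal (\<integral>x. \<integral>z. g z \<partial>D x \<partial>M) = ennreal (\<integral>z. g z \<partial>(M \<bind> D))"
    using e3 nn_integral_eq_integral[OF intM] by (simp add: nn)
  then have "(\<integral>x. \<integral>z. g z \<partial>D x \<partial>M) = (\<integral>z. g z \<partial>(M \<bind> D))"
    by (simp add: nn integral_nonneg_AE)
  then show "(\<integral>z. g z \<partial>(M \<bind> (\<lambda>x. distr (K x) (M \<Otimes>\<^sub>M M) (Pair x))))
      = (\<integral>x. \<integral>z. g z \<partial>distr (K x) (M \<Otimes>\<^sub>M M) (Pair x) \<partial>M)" by (simp add: D_def)
qed


lemma conv_D:
  fixes h :: "'a \<times> 'a \<Rightarrow> real"
  assumes K: "K \<in> M \<rightarrow>\<^sub>M prob_algebra M" and x: "x \<in> space M" and h: "h \<in> borel_measurable (M \<Otimes>\<^sub>M M)"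
  shows "integrable (distr (K x) (M \<Otimes>\<^sub>M M) (Pair x)) h = integrable (K x) (\<lambda>y. h (x, y))"
    "(\<integral>z. h z \<partial>distr (K x) (M \<Otimes>\<^sub>M M) (Pair x)) = (\<integral>y. h (x, y) \<partial>K x)"
proof -
  have P: "Pair x \<in> K x \<rightarrow>\<^sub>M M \<Otimes>\<^sub>M M"
    using kernel_sets[OF K x] x by (simp cong: measurable_cong_sets)
  show "integrable (distr (K x) (M \<Otimes>\<^sub>M M) (Pair x)) h = integrable (K x) (\<lambda>y. h (x, y))"
    using integrable_distr_eq[OF P h] by simp
  show "(\<integral>z. h z \<partial>distr (K x) (M \<Otimes>\<^sub>M M) (Pair x)) = (\<integral>y. h (x, y) \<partial>K x)"
    using integral_distr[OF P h] by simp
qed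

lemma fub:
  fixes g :: "'a \<times> 'a \<Rightarrow> real"
  assumes K: "K \<in> M \<rightarrow>\<^sub>M prob_algebra M" and g[measurable]: "g \<in> borel_measurable (M \<Otimes>\<^sub>M M)"
    and int: "integrable (M \<bind> (\<lambda>x. K x \<bind> (\<lambda>y. return (M \<Otimes>\<^sub>M M) (x, y)))) g"
    and Mne: "space M \<noteq> {}"
  shows "AE x in M. integrable (K x) (\<lambda>y. g (x, y))"
    "integrable M (\<lambda>x. \<integral>y. g (x, y) \<partial>K x)"
    "(\<integral>z. g z \<partial>(M \<bind> (\<lambda>x. K x \<bind> (\<lambda>y. return (M \<Otimes>\<^sub>M M) (x, y)))))
      = (\<integral>x. \<integral>y. g (x, y) \<partial>K x \<partial>M)"
proof -
  define J where "J = M \<bind> (\<lambda>x. distr (K x) (M \<Otimes>\<^sub>M M) (Pair x))"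
  have JJ: "M \<bind> (\<lambda>x. K x \<bind> (\<lambda>y. return (M \<Otimes>\<^sub>M M) (x, y))) = J"
    unfolding J_def by (rule bind_eq_D[OF K])
  define gp where "gp = (\<lambda>z. max (g z) 0)"
  define gn where "gn = (\<lambda>z. max (- g z) 0)"
  have gpm[measurable]: "gp \<in> borel_measurable (M \<Otimes>\<^sub>M M)" unfolding gp_def by measurable
  have gnm[measurable]: "gn \<in> borel_measurable (M \<Otimes>\<^sub>M M)" unfolding gn_def by measurable
  have gpn: "\<And>z. g z = gp z - gn z" unfolding gp_def gn_def by auto
  have intJ: "integrable J g" using int JJ by simp
  have intp: "integrable J gp" unfolding gp_def using intJ by (intro integrable_max) auto
  have intn: "integrable J gn" unfolding gn_def using intJ by (intro integrable_max) auto
  have gp0: "\<And>z. 0 \<le> gp z" and gn0: "\<And>z. 0 \<le> gn z" unfolding gp_def gn_def by auto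
  note P = fub_nonneg[OF K gpm gp0 intp[unfolded J_def] Mne]
  note N = fub_nonneg[OF K gnm gn0 intn[unfolded J_def] Mne]
  have P1: "AE x in M. integrable (K x) (\<lambda>y. gp (x, y))"
    using P(1) AE_space by eventually_elim (simp add: conv_D[OF K _ gpm])
  have N1: "AE x in M. integrable (K x) (\<lambda>y. gn (x, y))"
    using N(1) AE_space by eventually_elim (simp add: conv_D[OF K _ gnm])
  have ipD: "\<And>x. x \<in> space M \<Longrightarrow> (\<integral>z. gp z \<partial>distr (K x) (M \<Otimes>\<^sub>M M) (Pair x)) = (\<integral>y. gp (x, y) \<partial>K x)"
    by (rule conv_D(2)[OF K _ gpm])
  have inD: "\<And>x. x \<in> space M \<Longrightarrow> (\<integral>z. gn z \<partial>distr (K x) (M \<Otimes>\<^sub>M M) (Pair x)) = (\<integral>y. gn (x, y) \<partial>K x)"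
    by (rule conv_D(2)[OF K _ gnm])
  have P2: "integrable M (\<lambda>x. \<integral>y. gp (x, y) \<partial>K x)"
  proof -
    have "integrable M (\<lambda>x. \<integral>z. gp z \<partial>distr (K x) (M \<Otimes>\<^sub>M M) (Pair x)) = integrable M (\<lambda>x. \<integral>y. gp (x, y) \<partial>K x)"
      by (rule Bochner_Integration.integrable_cong[where f="\<lambda>x. \<integral>z. gp z \<partial>distr (K x) (M \<Otimes>\<^sub>M M) (Pair x)" and g="\<lambda>x. \<integral>y. gp (x, y) \<partial>K x"]) (simp_all add: ipD)
    then show ?thesis using P(2) by simp
  qed
  have N2: "integrable M (\<lambda>x. \<integral>y. gn (x, y) \<partial>K x)"
  proof -
    have "integrable M (\<lambda>x. \<integral>z. gn z \<partial>distr (K x) (M \<Otimes>\<^sub>M M) (Pair x)) = integrable M (\<lambda>x. \<integral>y. gn (x, y) \<partial>K x)"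
      by (rule Bochner_Integration.integrable_cong[where f="\<lambda>x. \<integral>z. gn z \<partial>distr (K x) (M \<Otimes>\<^sub>M M) (Pair x)" and g="\<lambda>x. \<integral>y. gn (x, y) \<partial>K x"]) (simp_all add: inD)
    then show ?thesis using N(2) by simp
  qed
  have P3: "(\<integral>z. gp z \<partial>J) = (\<integral>x. \<integral>y. gp (x, y) \<partial>K x \<partial>M)"
    unfolding J_def P(3) by (rule Bochner_Integration.integral_cong) (simp_all add: ipD)
  have N3: "(\<integral>z. gn z \<partial>J) = (\<integral>x. \<integral>y. gn (x, y) \<partial>K x \<partial>M)"
    unfolding J_def N(3) by (rule Bochner_Integration.integral_cong) (simp_all add: inD)
  show ae: "AE x in M. integrable (K x) (\<lambda>y. g (x, y))"
    using P1 N1 by eventually_elim (simp add: gpn)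
  have aeq: "AE x in M. (\<integral>y. g (x, y) \<partial>K x) = (\<integral>y. gp (x, y) \<partial>K x) - (\<integral>y. gn (x, y) \<partial>K x)"
    using P1 N1 by eventually_elim (simp add: gpn)
  have im: "(\<lambda>x. \<integral>y. g (x, y) \<partial>K x) \<in> borel_measurable M"
    by (rule inner_meas[OF K g])
  have imd: "(\<lambda>x. (\<integral>y. gp (x, y) \<partial>K x) - (\<integral>y. gn (x, y) \<partial>K x)) \<in> borel_measurable M"
    using inner_meas[OF K gpm] inner_meas[OF K gnm] by measurable
  show "integrable M (\<lambda>x. \<integral>y. g (x, y) \<partial>K x)"
    using integrable_cong_AE[OF im imd aeq] P2 N2 by simp
  have "(\<integral>z. g z \<partial>J) = (\<integral>z. gp z \<partial>J) - (\<integral>z. gn z \<partial>J)"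
    using intp intn by (simp add: gpn)
  also have "\<dots> = (\<integral>x. (\<integral>y. gp (x, y) \<partial>K x) - (\<integral>y. gn (x, y) \<partial>K x) \<partial>M)"
    using P2 N2 P3 N3 by simp
  also have "\<dots> = (\<integral>x. \<integral>y. g (x, y) \<partial>K x \<partial>M)"
    using integral_cong_AE[OF imd im] aeq by (simp add: eq_commute)
  finally show "(\<integral>z. g z \<partial>(M \<bind> (\<lambda>x. K x \<bind> (\<lambda>y. return (M \<Otimes>\<^sub>M M) (x, y)))))
      = (\<integral>x. \<integral>y. g (x, y) \<partial>K x \<partial>M)" using JJ by simp
qed


lemma pow_bound:
  fixes a b :: real
  assumes "i + j = 4"
  shows "\<bar>a ^ i * b ^ j\<bar> \<le> a ^ 4 + b ^ 4"
proof -
  define c where "c = max \<bar>a\<bar> \<bar>b\<bar>"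
  have "\<bar>a ^ i * b ^ j\<bar> = \<bar>a\<bar> ^ i * \<bar>b\<bar> ^ j" by (simp add: abs_mult power_abs)
  also have "\<dots> \<le> c ^ i * c ^ j"
    by (intro mult_mono power_mono) (auto simp: c_def)
  also have "\<dots> = c ^ 4" using assms by (simp add: power_add[symmetric])
  also have "\<dots> \<le> a ^ 4 + b ^ 4"
  proof (cases "\<bar>a\<bar> \<le> \<bar>b\<bar>")
    case True
    then have "c ^ 4 = \<bar>b\<bar> ^ 4" by (simp add: c_def max_def)
    also have "\<dots> = b ^ 4" by (simp add: power_even_abs)
    finally show ?thesis by (simp add: zero_le_even_power)
  next
    case False
    then have "c ^ 4 = \<bar>a\<bar> ^ 4" by (simp add: c_def max_def)
    also have "\<dots> = a ^ 4" by (simp add: power_even_abs)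
    finally show ?thesis by (simp add: zero_le_even_power)
  qed
  finally show ?thesis .
qed

lemma pow_bound1:
  fixes a :: real
  assumes "k \<le> 4"
  shows "\<bar>a ^ k\<bar> \<le> 1 + a ^ 4"
proof (cases "\<bar>a\<bar> \<le> 1")
  case True
  then have "\<bar>a ^ k\<bar> \<le> 1" by (simp add: power_abs power_le_one)
  moreover have "0 \<le> a ^ 4" by (simp add: zero_le_even_power)
  ultimately show ?thesis by linarith
next
  case False
  then have "\<bar>a\<bar> ^ k \<le> \<bar>a\<bar> ^ 4" by (intro power_increasing assms) auto
  also have "\<bar>a\<bar> ^ 4 = a ^ 4" by (simp add: power_even_abs)
  finally show ?thesis by (simp add: power_abs)
qed


lemma Lgen_meas:
  assumes K: "K \<in> M \<rightarrow>\<^sub>M prob_algebra M" and h: "h \<in> borel_measurable M"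
  shows "Lgen K h \<in> borel_measurable M"
proof -
  have "(\<lambda>z. h (snd z) - h (fst z)) \<in> borel_measurable (M \<Otimes>\<^sub>M M)" using h by measurable
  from inner_meas[OF K this] show ?thesis unfolding Lgen_def[abs_def] by simp
qed

theorem lemma2p6:
  fixes P :: "'b measure" and M :: "'a measure"
    and X X' :: "'b \<Rightarrow> 'a" and K :: "'a \<Rightarrow> 'a measure" and F :: "'a \<Rightarrow> real"
  assumes "prob_space P"
    and "X \<in> measurable P M" and "X' \<in> measurable P M"
    and "distr P M X = M"
    and exch: "distr P (M \<Otimes>\<^sub>M M) (\<lambda>\<omega>. (X \<omega>, X' \<omega>)) = distr P (M \<Otimes>\<^sub>M M) (\<lambda>\<omega>. (X' \<omega>, X \<omega>))"
    and K_meas: "K \<in> M \<rightarrow>\<^sub>M prob_algebra M"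
    and K_rcd: "distr P (M \<Otimes>\<^sub>M M) (\<lambda>\<omega>. (X \<omega>, X' \<omega>))
                 = M \<bind> (\<lambda>x. K x \<bind> (\<lambda>y. return (M \<Otimes>\<^sub>M M) (x, y)))"
    and F_meas: "F \<in> borel_measurable M"
    and F_L4: "integrable M (\<lambda>x. (F x) ^ 4)"
  shows "(\<integral>\<omega>. (F (X' \<omega>) - F (X \<omega>)) ^ 4 \<partial>P)
           = 4 * ((\<integral>x. (F x) ^ 3 * Lgen K F x \<partial>M) + 3 * (\<integral>x. (F x) ^ 2 * Gam K F F x \<partial>M))
       \<and> (\<integral>\<omega>. (F (X' \<omega>) - F (X \<omega>)) ^ 4 \<partial>P)
           = 4 * (3 * (\<integral>x. (F x) ^ 2 * Gam K F F x \<partial>M) - (\<integral>x. Gam K (\<lambda>y. (F y) ^ 3) F x \<partial>M))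
       \<and> (\<forall>lam::real. lam > 0 \<longrightarrow> (AE x in M. Lgen K F x = - lam * F x) \<longrightarrow>
            (\<integral>\<omega>. (F (X' \<omega>) - F (X \<omega>)) ^ 4 \<partial>P)
              = 4 * lam * (3 * (\<integral>x. (F x) ^ 2 * (inverse lam * Gam K F F x) \<partial>M) - (\<integral>x. (F x) ^ 4 \<partial>M)))"
proof -
  interpret P: prob_space P by fact
  have XM[measurable]: "X \<in> P \<rightarrow>\<^sub>M M" and X'M[measurable]: "X' \<in> P \<rightarrow>\<^sub>M M" by fact+
  note Fm[measurable] = F_meas
  have Mprob: "prob_space M" using P.prob_space_distr[OF XM] assms(4) by simp
  interpret M: prob_space M by (rule Mprob)
  have Mne: "space M \<noteq> {}" by (rule M.not_empty)
  define J where "J = distr P (M \<Otimes>\<^sub>M M) (\<lambda>\<omega>. (X \<omega>, X' \<omega>))"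
  have Jb: "M \<bind> (\<lambda>x. K x \<bind> (\<lambda>y. return (M \<Otimes>\<^sub>M M) (x, y))) = J" using K_rcd J_def by simp
  have XX[measurable]: "(\<lambda>\<omega>. (X \<omega>, X' \<omega>)) \<in> P \<rightarrow>\<^sub>M M \<Otimes>\<^sub>M M" by measurable
  have XX'[measurable]: "(\<lambda>\<omega>. (X' \<omega>, X \<omega>)) \<in> P \<rightarrow>\<^sub>M M \<Otimes>\<^sub>M M" by measurable
  have intJ_iff: "integrable J h \<longleftrightarrow> integrable P (\<lambda>\<omega>. h (X \<omega>, X' \<omega>))"
    if h: "h \<in> borel_measurable (M \<Otimes>\<^sub>M M)" for h :: "'a \<times> 'a \<Rightarrow> real"
    unfolding J_def by (rule integrable_distr_eq[OF XX h])
  have intJ_eq: "(\<integral>z. h z \<partial>J) = (\<integral>\<omega>. h (X \<omega>, X' \<omega>) \<partial>P)"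
    if h: "h \<in> borel_measurable (M \<Otimes>\<^sub>M M)" for h :: "'a \<times> 'a \<Rightarrow> real"
    unfolding J_def by (rule integral_distr[OF XX h])
  have swap_int: "integrable J h \<longleftrightarrow> integrable J (\<lambda>z. h (snd z, fst z))"
    if h[measurable]: "h \<in> borel_measurable (M \<Otimes>\<^sub>M M)" for h :: "'a \<times> 'a \<Rightarrow> real"
  proof -
    have "integrable J h \<longleftrightarrow> integrable P (\<lambda>\<omega>. h (X' \<omega>, X \<omega>))"
      unfolding J_def exch by (rule integrable_distr_eq[OF XX' h])
    also have "\<dots> \<longleftrightarrow> integrable J (\<lambda>z. h (snd z, fst z))"
      by (subst intJ_iff) simp_all
    finally show ?thesis .
  qed
  have swap_eq: "(\<integral>z. h z \<partial>J) = (\<integral>z. h (snd z, fst z) \<partial>J)"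
    if h[measurable]: "h \<in> borel_measurable (M \<Otimes>\<^sub>M M)" for h :: "'a \<times> 'a \<Rightarrow> real"
  proof -
    have "(\<integral>z. h z \<partial>J) = (\<integral>\<omega>. h (X' \<omega>, X \<omega>) \<partial>P)"
      unfolding J_def exch by (rule integral_distr[OF XX' h])
    also have "\<dots> = (\<integral>z. h (snd z, fst z) \<partial>J)"
      by (subst intJ_eq) simp_all
    finally show ?thesis .
  qed
  have int40: "integrable J (\<lambda>z. F (fst z) ^ 4)"
  proof -
    have "integrable (distr P M X) (\<lambda>x. F x ^ 4)" using F_L4 assms(4) by simp
    then have "integrable P (\<lambda>\<omega>. F (X \<omega>) ^ 4)" by (subst (asm) integrable_distr_eq) simp_all
    then show ?thesis by (subst intJ_iff) simp_all
  qed
  have E40: "(\<integral>z. F (fst z) ^ 4 \<partial>J) = (\<integral>x. F x ^ 4 \<partial>M)"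
  proof -
    have "(\<integral>x. F x ^ 4 \<partial>M) = (\<integral>x. F x ^ 4 \<partial>distr P M X)" using assms(4) by simp
    also have "\<dots> = (\<integral>\<omega>. F (X \<omega>) ^ 4 \<partial>P)" by (rule integral_distr) simp_all
    finally show ?thesis by (subst intJ_eq) simp_all
  qed
  have int04: "integrable J (\<lambda>z. F (snd z) ^ 4)"
    using int40 by (subst swap_int) simp_all
  have intg: "integrable J (\<lambda>z. F (fst z) ^ i * F (snd z) ^ j)" if ij: "i + j = 4" for i j
  proof (rule Bochner_Integration.integrable_bound[OF Bochner_Integration.integrable_add[OF int40 int04]])
    show "(\<lambda>z. F (fst z) ^ i * F (snd z) ^ j) \<in> borel_measurable J" unfolding J_def by measurable
    show "AE z in J. norm (F (fst z) ^ i * F (snd z) ^ j) \<le> norm (F (fst z) ^ 4 + F (snd z) ^ 4)"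
      using pow_bound[OF ij] by (auto intro!: AE_I2 simp: zero_le_even_power)
  qed
  define m where "m k x = (\<integral>y. F y ^ k \<partial>K x)" for k x
  have mm[measurable]: "m k \<in> borel_measurable M" for k
  proof -
    have "(\<lambda>z. F (snd z) ^ k) \<in> borel_measurable (M \<Otimes>\<^sub>M M)" by measurable
    from inner_meas[OF K_meas this] show ?thesis unfolding m_def[abs_def] by simp
  qed
  have fubg: "integrable M (\<lambda>x. F x ^ i * m j x) \<and> (\<integral>z. F (fst z) ^ i * F (snd z) ^ j \<partial>J) = (\<integral>x. F x ^ i * m j x \<partial>M)"
    if ij: "i + j = 4" for i j
  proof -
    have gm: "(\<lambda>z. F (fst z) ^ i * F (snd z) ^ j) \<in> borel_measurable (M \<Otimes>\<^sub>M M)" by measurable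
    note f = fub[OF K_meas gm _ Mne, unfolded Jb, OF intg[OF ij]]
    show ?thesis using f(2,3) by (simp add: m_def)
  qed
  have aeK: "AE x in M. integrable (K x) (\<lambda>y. F y ^ 4)"
  proof -
    have gm: "(\<lambda>z. F (snd z) ^ 4) \<in> borel_measurable (M \<Otimes>\<^sub>M M)" by measurable
    show ?thesis using fub(1)[OF K_meas gm _ Mne, unfolded Jb, OF int04] by simp
  qed
  have aeL: "AE x in M. Lgen K F x = m 1 x - F x \<and> Lgen K (\<lambda>y. F y * F y) x = m 2 x - F x ^ 2
     \<and> Lgen K (\<lambda>y. F y ^ 3) x = m 3 x - F x ^ 3 \<and> Lgen K (\<lambda>y. F y ^ 3 * F y) x = m 4 x - F x ^ 4"
    using aeK AE_space
  proof eventually_elim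
    case (elim x)
    interpret Kx: prob_space "K x" using kernel_sets[OF K_meas elim(2)] by simp
    have sK: "sets (K x) = sets M" using kernel_sets[OF K_meas elim(2)] by simp
    have FK[measurable]: "F \<in> borel_measurable (K x)" using Fm sK by (simp cong: measurable_cong_sets)
    have ik: "integrable (K x) (\<lambda>y. F y ^ k)" if k: "k \<le> 4" for k
    proof (rule Bochner_Integration.integrable_bound[OF Bochner_Integration.integrable_add[OF Kx.integrable_const elim(1)]])
      show "(\<lambda>y. F y ^ k) \<in> borel_measurable (K x)" by measurable
      show "AE y in K x. norm (F y ^ k) \<le> norm (1 + F y ^ 4)"
        using pow_bound1[OF k] by (auto intro!: AE_I2 simp: zero_le_even_power)
    qed
    have i1: "integrable (K x) F" using ik[of 1] by simp
    have i2: "integrable (K x) (\<lambda>y. F y * F y)" using ik[of 2] by (simp add: power2_eq_square)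
    have i3: "integrable (K x) (\<lambda>y. F y ^ 3)" using ik[of 3] by simp
    have i4: "integrable (K x) (\<lambda>y. F y ^ 3 * F y)" using ik[of 4] by (simp add: power_Suc2[symmetric] del: power_Suc)
    have c: "(\<integral>y. c \<partial>K x) = c" for c :: real by (simp add: Kx.prob_space)
    show ?case unfolding Lgen_def m_def
      using i1 i2 i3 i4 elim(1)
      by (simp add: Bochner_Integration.integral_diff c Kx.prob_space power2_eq_square power_Suc2[symmetric] del: power_Suc)
  qed
  define gg where "gg i j = (\<lambda>z. F (fst z) ^ i * F (snd z) ^ j)" for i j :: nat
  define E where "E i j = (\<integral>z. gg i j z \<partial>J)" for i j
  have igg: "integrable J (gg i j)" if "i + j = 4" for i j
    unfolding gg_def using intg[OF that] .
  have Eg: "E i j = (\<integral>x. F x ^ i * m j x \<partial>M)" if "i + j = 4" for i j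
    unfolding E_def gg_def using fubg[OF that] by simp
  have Ig: "integrable M (\<lambda>x. F x ^ i * m j x)" if "i + j = 4" for i j
    using fubg[OF that] by simp
  have E40': "E 4 0 = (\<integral>x. F x ^ 4 \<partial>M)" unfolding E_def gg_def using E40 by simp
  have sym1: "E 0 4 = E 4 0"
  proof -
    have "E 4 0 = (\<integral>z. gg 4 0 (snd z, fst z) \<partial>J)" unfolding E_def
      by (rule swap_eq) (simp add: gg_def)
    then show ?thesis unfolding E_def by (simp add: gg_def)
  qed
  have sym2: "E 1 3 = E 3 1"
  proof -
    have "E 3 1 = (\<integral>z. gg 3 1 (snd z, fst z) \<partial>J)" unfolding E_def
      by (rule swap_eq) (simp add: gg_def)
    then show ?thesis unfolding E_def by (simp add: gg_def mult.commute)
  qed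
  have LHS: "(\<integral>\<omega>. (F (X' \<omega>) - F (X \<omega>)) ^ 4 \<partial>P) = E 0 4 - 4 * E 1 3 + 6 * E 2 2 - 4 * E 3 1 + E 4 0"
  proof -
    have "(\<integral>z. (F (snd z) - F (fst z)) ^ 4 \<partial>J) = (\<integral>\<omega>. (F (X' \<omega>) - F (X \<omega>)) ^ 4 \<partial>P)"
      by (subst intJ_eq) simp_all
    moreover have "(\<lambda>z. (F (snd z) - F (fst z)) ^ 4) = (\<lambda>z. gg 0 4 z - 4 * gg 1 3 z + 6 * gg 2 2 z - 4 * gg 3 1 z + gg 4 0 z)"
      unfolding gg_def by (rule ext) algebra
    moreover have "(\<integral>z. gg 0 4 z - 4 * gg 1 3 z + 6 * gg 2 2 z - 4 * gg 3 1 z + gg 4 0 z \<partial>J) = E 0 4 - 4 * E 1 3 + 6 * E 2 2 - 4 * E 3 1 + E 4 0"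
      unfolding E_def using igg[of 0 4] igg[of 1 3] igg[of 2 2] igg[of 3 1] igg[of 4 0] by simp
    ultimately show ?thesis by simp
  qed
  have LF[measurable]: "Lgen K F \<in> borel_measurable M" by (rule Lgen_meas[OF K_meas]) simp
  have L2[measurable]: "Lgen K (\<lambda>y. F y * F y) \<in> borel_measurable M" by (rule Lgen_meas[OF K_meas]) simp
  have L3[measurable]: "Lgen K (\<lambda>y. F y ^ 3) \<in> borel_measurable M" by (rule Lgen_meas[OF K_meas]) simp
  have L4[measurable]: "Lgen K (\<lambda>y. F y ^ 3 * F y) \<in> borel_measurable M" by (rule Lgen_meas[OF K_meas]) simp
  have T1: "(\<integral>x. F x ^ 3 * Lgen K F x \<partial>M) = E 3 1 - E 4 0"
  proof -
    have "(\<integral>x. F x ^ 3 * Lgen K F x \<partial>M) = (\<integral>x. F x ^ 3 * m 1 x - F x ^ 4 \<partial>M)"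
      by (rule integral_cong_AE) (measurable, use aeL in eventually_elim, elim conjE, simp only:, simp add: algebra_simps power2_eq_square power3_eq_cube power4_eq_xxxx)
    also have "\<dots> = E 3 1 - E 4 0"
      using Ig[of 3 1] F_L4 Eg[of 3 1] E40' by simp
    finally show ?thesis .
  qed
  have T2: "(\<integral>x. F x ^ 2 * Gam K F F x \<partial>M) = (E 2 2 - 2 * E 3 1 + E 4 0) / 2"
  proof -
    have "(\<integral>x. F x ^ 2 * Gam K F F x \<partial>M) = (\<integral>x. (F x ^ 2 * m 2 x - 2 * (F x ^ 3 * m 1 x) + F x ^ 4) / 2 \<partial>M)"
      unfolding Gam_def
      by (rule integral_cong_AE) (measurable, use aeL in eventually_elim, elim conjE, simp only:, simp add: algebra_simps power2_eq_square power3_eq_cube power4_eq_xxxx)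
    also have "\<dots> = (E 2 2 - 2 * E 3 1 + E 4 0) / 2"
      using Ig[of 3 1] Ig[of 2 2] F_L4 Eg[of 3 1] Eg[of 2 2] E40' by simp
    finally show ?thesis .
  qed
  have T3: "(\<integral>x. Gam K (\<lambda>y. F y ^ 3) F x \<partial>M) = (E 0 4 - E 3 1 - E 1 3 + E 4 0) / 2"
  proof -
    have "(\<integral>x. Gam K (\<lambda>y. F y ^ 3) F x \<partial>M) = (\<integral>x. (m 4 x - F x ^ 3 * m 1 x - F x * m 3 x + F x ^ 4) / 2 \<partial>M)"
      unfolding Gam_def
      by (rule integral_cong_AE) (measurable, use aeL in eventually_elim, elim conjE, simp only:, simp add: algebra_simps power2_eq_square power3_eq_cube power4_eq_xxxx)
    also have "\<dots> = (E 0 4 - E 3 1 - E 1 3 + E 4 0) / 2"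
      using Ig[of 3 1] Ig[of 0 4] Ig[of 1 3] F_L4 Eg[of 3 1] Eg[of 0 4] Eg[of 1 3] E40' by simp
    finally show ?thesis .
  qed
  have part3: "(\<integral>\<omega>. (F (X' \<omega>) - F (X \<omega>)) ^ 4 \<partial>P)
              = 4 * lam * (3 * (\<integral>x. (F x) ^ 2 * (inverse lam * Gam K F F x) \<partial>M) - (\<integral>x. (F x) ^ 4 \<partial>M))"
    if lam: "lam > 0" and ae: "AE x in M. Lgen K F x = - lam * F x" for lam :: real
  proof -
    have "(\<integral>x. F x ^ 3 * Lgen K F x \<partial>M) = (\<integral>x. - lam * F x ^ 4 \<partial>M)"
      by (rule integral_cong_AE) (measurable, use ae in eventually_elim, simp add: algebra_simps power3_eq_cube power4_eq_xxxx)
    then have T1': "E 3 1 - E 4 0 = - lam * E 4 0" using T1 E40' by simp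
    have eqI: "(\<integral>x. (F x) ^ 2 * (inverse lam * Gam K F F x) \<partial>M) = inverse lam * (\<integral>x. F x ^ 2 * Gam K F F x \<partial>M)"
      by (simp add: algebra_simps)
    have eqR: "4 * lam * (3 * (inverse lam * (\<integral>x. F x ^ 2 * Gam K F F x \<partial>M)) - (\<integral>x. (F x) ^ 4 \<partial>M))
       = 12 * (\<integral>x. F x ^ 2 * Gam K F F x \<partial>M) - 4 * (lam * (\<integral>x. (F x) ^ 4 \<partial>M))"
      using lam by (simp add: field_simps)
    have T1'': "E 3 1 - E 4 0 = - (lam * (\<integral>x. (F x) ^ 4 \<partial>M))" using T1' E40' by simp
    have A: "(\<integral>\<omega>. (F (X' \<omega>) - F (X \<omega>)) ^ 4 \<partial>P) = 2 * E 4 0 - 8 * E 3 1 + 6 * E 2 2"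
      using LHS sym1 sym2 by simp
    have li: "lam * (inverse lam * x) = x" for x using lam by simp
    have "4 * lam * (3 * (inverse lam * ((E 2 2 - 2 * E 3 1 + E 4 0) / 2)) - (\<integral>x. (F x) ^ 4 \<partial>M))
      = 6 * E 2 2 - 12 * E 3 1 + 6 * E 4 0 - 4 * (lam * (\<integral>x. (F x) ^ 4 \<partial>M))"
      using lam by (simp add: algebra_simps li divide_simps)
    then show ?thesis unfolding eqI A T2 using T1'' E40' by linarith
  qed
  show ?thesis using LHS T1 T2 T3 sym1 sym2 part3 by (simp add: algebra_simps)
qed

end
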